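(* Let $p\ge1$, $\hat p:=\min(p,2)$, and let $\mathscr N$ be a semi-norm on $\mathbb R^n$ that is $\hat p$-uniformly smooth with constant $S$. Let $\mu$ be the probability measure on $\ker(\mathscr N)^\perp$ with density proportional to $e^{-\mathscr N(x)^{\hat p}}$. Then for every semi-norm $\hat N$ on $\mathbb R^n$ with $\ker(\mathscr N)\subseteq\ker(\hat N)$, $\max_{x\in B_{\mathscr N}}\hat N(x)\le 12S\int\hat N(x)\,d\mu(x).$
   Context: $\ker(N):=\{x:N(x)=0\}$; $B_{\mathscr N}:=\{x:\mathscr N(x)\le1\}$. A semi-norm $\mathscr N$ is $q$-uniformly smooth with constant $S$ if $\frac{\mathscr N(x+y)^q+\mathscr N(x-y)^q}{2}\le\mathscr N(x)^q+\mathscr N(Sy)^q$ for all $x,y$. *)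

theory Defs
  imports "HOL-Analysis.Analysis"
begin

definition seminorm :: "('a::real_vector \<Rightarrow> real) \<Rightarrow> bool" where
  "seminorm N \<longleftrightarrow> (\<forall>x. 0 \<le> N x) \<and> (\<forall>c x. N (c *\<^sub>R x) = \<bar>c\<bar> * N x)
     \<and> (\<forall>x y. N (x + y) \<le> N x + N y)"

definition ker_sn :: "('a::real_vector \<Rightarrow> real) \<Rightarrow> 'a set" where
  "ker_sn N = {x. N x = 0}"

definition unit_ball_sn :: "('a::real_vector \<Rightarrow> real) \<Rightarrow> 'a set" where
  "unit_ball_sn N = {x. N x \<le> 1}"

definition uniformly_smooth :: "real \<Rightarrow> real \<Rightarrow> ('a::real_vector \<Rightarrow> real) \<Rightarrow> bool" where
  "uniformly_smooth q S N \<longleftrightarrow>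
     (\<forall>x y. (N (x + y) powr q + N (x - y) powr q) / 2 \<le> N x powr q + N (S *\<^sub>R y) powr q)"

definition orth_comp :: "'a::real_inner set \<Rightarrow> 'a set" where
  "orth_comp V = {x. \<forall>y\<in>V. inner x y = 0}"

text \<open>Lebesgue measure on the subspace range L, transported by a linear bijection
  L onto that subspace (determined up to a positive scalar factor), and the probability
  measure on range L with density proportional to exp(-N(x) powr q) w.r.t. it.\<close>
definition subspace_leb :: "('m::euclidean_space \<Rightarrow> 'n::euclidean_space) \<Rightarrow> 'n measure" where
  "subspace_leb L = distr lborel borel L"

definition exp_density_measure ::
  "('m::euclidean_space \<Rightarrow> 'n::euclidean_space) \<Rightarrow> real \<Rightarrow> ('n \<Rightarrow> real) \<Rightarrow> 'n measure" where
  "exp_density_measure L q N =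
     (let Z = integral\<^sup>L (subspace_leb L) (\<lambda>x. exp (- (N x powr q)))
      in density (subspace_leb L) (\<lambda>x. ennreal (exp (- (N x powr q)) / Z)))"

end

theory Submission
  imports Defs "HOL-Probability.Distributions"
begin


lemma sn_0: "seminorm N \<Longrightarrow> N 0 = 0"
  unfolding seminorm_def by (metis abs_zero mult_zero_left scaleR_zero_left)

lemma sn_neg: "seminorm N \<Longrightarrow> N (- x) = N x"
  unfolding seminorm_def by (metis abs_minus_cancel abs_one mult_1 scaleR_minus1_left)

lemma sn_add: "seminorm N \<Longrightarrow> N (x + y) \<le> N x + N y"
  unfolding seminorm_def by blast

lemma sn_nonneg: "seminorm N \<Longrightarrow> 0 \<le> N x"
  unfolding seminorm_def by blast

lemma sn_scale: "seminorm N \<Longrightarrow> N (c *\<^sub>R x) = \<bar>c\<bar> * N x"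
  unfolding seminorm_def by blast

lemma sn_diff: "seminorm N \<Longrightarrow> N (x - y) \<le> N x + N y"
  using sn_add[of N x "- y"] sn_neg[of N y] by simp

lemma sn_rev: "seminorm N \<Longrightarrow> N x - N y \<le> N (x - y)"
  using sn_add[of N "x - y" y] by simp

lemma sn_sum: assumes "seminorm N" shows "N (sum f A) \<le> (\<Sum>a\<in>A. N (f a))"
proof (induction A rule: infinite_finite_induct)
  case (infinite A) then show ?case using sn_0[OF assms] by simp
next
  case empty then show ?case using sn_0[OF assms] by simp
next
  case (insert a A)
  then show ?case using sn_add[OF assms, of "f a" "sum f A"] by simp
qed

lemma sn_upper:
  fixes N :: "'a::euclidean_space \<Rightarrow> real"
  assumes "seminorm N"
  shows "\<exists>C\<ge>0. \<forall>x. N x \<le> C * norm x"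
proof (intro exI[of _ "\<Sum>b\<in>Basis. N b"] conjI allI)
  show "0 \<le> (\<Sum>b\<in>Basis. N b)" using sn_nonneg[OF assms] by (simp add: sum_nonneg)
  fix x :: 'a
  have "N x = N (\<Sum>b\<in>Basis. (x \<bullet> b) *\<^sub>R b)" by (simp add: euclidean_representation)
  also have "\<dots> \<le> (\<Sum>b\<in>Basis. N ((x \<bullet> b) *\<^sub>R b))" by (rule sn_sum[OF assms])
  also have "\<dots> = (\<Sum>b\<in>Basis. \<bar>x \<bullet> b\<bar> * N b)" using sn_scale[OF assms] by simp
  also have "\<dots> \<le> (\<Sum>b\<in>Basis. norm x * N b)"
    by (intro sum_mono mult_right_mono Basis_le_norm sn_nonneg[OF assms])
  also have "\<dots> = (\<Sum>b\<in>Basis. N b) * norm x" by (simp add: sum_distrib_left mult.commute)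
  finally show "N x \<le> (\<Sum>b\<in>Basis. N b) * norm x" .
qed

lemma sn_cont:
  fixes N :: "'a::euclidean_space \<Rightarrow> real"
  assumes "seminorm N"
  shows "continuous_on UNIV N"
proof -
  obtain C where C: "C \<ge> 0" "\<And>x. N x \<le> C * norm x" using sn_upper[OF assms] by blast
  have "C-lipschitz_on UNIV N"
  proof (rule lipschitz_onI)
    fix x y :: 'a
    have "N x - N y \<le> C * dist x y" using sn_rev[OF assms, of x y] C(2)[of "x - y"] by (simp add: dist_norm)
    moreover have "N y - N x \<le> C * dist x y" using sn_rev[OF assms, of y x] C(2)[of "y - x"] by (simp add: dist_norm norm_minus_commute)
    ultimately show "dist (N x) (N y) \<le> C * dist x y" by (simp add: dist_real_def)
  qed (rule C(1))
  then show ?thesis by (rule lipschitz_on_continuous_on)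
qed

lemma sn_meas:
  fixes N :: "'a::euclidean_space \<Rightarrow> real"
  assumes "seminorm N"
  shows "N \<in> borel_measurable borel"
  by (rule borel_measurable_continuous_onI[OF sn_cont[OF assms]])

lemma sn_lower:
  fixes M :: "'a::euclidean_space \<Rightarrow> real"
  assumes "seminorm M" and def: "\<And>x. M x = 0 \<Longrightarrow> x = 0"
  shows "\<exists>c>0. \<forall>x. c * norm x \<le> M x"
proof -
  obtain b :: 'a where b: "b \<in> Basis" using nonempty_Basis by blast
  have ne: "sphere (0::'a) 1 \<noteq> {}" using b by (auto intro!: exI[of _ b])
  obtain z where z: "z \<in> sphere 0 1" "\<And>y. y \<in> sphere 0 1 \<Longrightarrow> M z \<le> M y"
    using continuous_attains_inf[OF compact_sphere ne continuous_on_subset[OF sn_cont[OF assms(1)]]] by blast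
  have "z \<noteq> 0" using z by auto
  then have pos: "M z > 0" using def sn_nonneg[OF assms(1), of z] by force
  show ?thesis
  proof (intro exI[of _ "M z"] conjI allI pos)
    fix x :: 'a
    show "M z * norm x \<le> M x"
    proof (cases "x = 0")
      case True then show ?thesis by (simp add: sn_0[OF assms(1)])
    next
      case False
      then have "M z \<le> M ((1 / norm x) *\<^sub>R x)" by (intro z(2)) auto
      also have "\<dots> = M x / norm x" using sn_scale[OF assms(1)] by simp
      finally show ?thesis using False by (simp add: field_simps)
    qed
  qed
qed



lemma exp_abs_1d_base: "(\<integral>\<^sup>+x. ennreal (exp (- \<bar>x\<bar>)) \<partial>lborel) \<le> 2"
proof -
  let ?f = "\<lambda>x::real. ennreal (exp (- x)) * indicator {0..} x"
  have f1: "(\<integral>\<^sup>+x. ?f x \<partial>lborel) = 1"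
    using nn_intergal_power_times_exp_Ici[of 0] by simp
  have f2: "(\<integral>\<^sup>+x. ?f (- x) \<partial>lborel) = 1"
    using nn_integral_real_affine[of ?f "-1" 0] f1 by simp
  have "(\<integral>\<^sup>+x. ennreal (exp (- \<bar>x\<bar>)) \<partial>lborel) \<le> (\<integral>\<^sup>+x. ?f x + ?f (- x) \<partial>lborel)"
    by (intro nn_integral_mono) (auto split: split_indicator)
  also have "\<dots> = (\<integral>\<^sup>+x. ?f x \<partial>lborel) + (\<integral>\<^sup>+x. ?f (- x) \<partial>lborel)"
    by (intro nn_integral_add) auto
  finally show ?thesis using f1 f2 by (simp add: one_add_one)
qed

lemma exp_abs_1d: assumes "a > 0" shows "(\<integral>\<^sup>+x. ennreal (exp (- a * \<bar>x\<bar>)) \<partial>lborel) < \<infinity>"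
proof -
  have "(\<integral>\<^sup>+x. ennreal (exp (- a * \<bar>x\<bar>)) \<partial>lborel) = \<bar>1/a\<bar> * (\<integral>\<^sup>+x. ennreal (exp (- a * \<bar>0 + (1/a) * x\<bar>)) \<partial>lborel)"
    using assms by (intro nn_integral_real_affine) auto
  also have "(\<lambda>x. ennreal (exp (- a * \<bar>0 + (1/a) * x\<bar>))) = (\<lambda>x. ennreal (exp (- \<bar>x\<bar>)))"
    using assms by (auto simp: abs_mult)
  also have "ennreal \<bar>1/a\<bar> * (\<integral>\<^sup>+x. ennreal (exp (- \<bar>x\<bar>)) \<partial>lborel) \<le> ennreal \<bar>1/a\<bar> * 2"
    by (rule mult_left_mono[OF exp_abs_1d_base]) simp
  also have "\<dots> < \<infinity>" by (simp add: ennreal_mult_less_top)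
  finally show ?thesis .
qed

lemma exp_norm_integrable:
  assumes "d > 0"
  shows "integrable lborel (\<lambda>y::'a::euclidean_space. exp (- d * norm y))"
proof -
  define a where "a = d / DIM('a)"
  have a: "a > 0" using assms by (simp add: a_def)
  have bound: "exp (- d * norm y) \<le> (\<Prod>b\<in>Basis. exp (- a * \<bar>y \<bullet> b\<bar>))" for y :: 'a
  proof -
    have "(\<Sum>b\<in>(Basis::'a set). a * \<bar>y \<bullet> b\<bar>) \<le> (\<Sum>b\<in>(Basis::'a set). a * norm y)"
      using a by (intro sum_mono mult_left_mono Basis_le_norm) auto
    also have "\<dots> = d * norm y" by (simp add: a_def)
    finally have "- d * norm y \<le> - (\<Sum>b\<in>(Basis::'a set). a * \<bar>y \<bullet> b\<bar>)" by simp
    then have "exp (- d * norm y) \<le> exp (- (\<Sum>b\<in>(Basis::'a set). a * \<bar>y \<bullet> b\<bar>))" by simp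
    also have "\<dots> = (\<Prod>b\<in>Basis. exp (- a * \<bar>y \<bullet> b\<bar>))"
      by (simp add: exp_sum[symmetric] sum_negf)
    finally show ?thesis .
  qed
  have "(\<integral>\<^sup>+y. ennreal (norm (exp (- d * norm y))) \<partial>(lborel::'a measure))
        \<le> (\<integral>\<^sup>+y. (\<Prod>b\<in>Basis. ennreal (exp (- a * \<bar>y \<bullet> b\<bar>))) \<partial>(lborel::'a measure))"
  proof (rule nn_integral_mono)
    fix y :: 'a
    have "ennreal (norm (exp (- d * norm y))) = ennreal (exp (- d * norm y))" by simp
    also have "\<dots> \<le> ennreal (\<Prod>b\<in>Basis. exp (- a * \<bar>y \<bullet> b\<bar>))"
      using bound[of y] by (rule ennreal_leI)
    also have "\<dots> = (\<Prod>b\<in>Basis. ennreal (exp (- a * \<bar>y \<bullet> b\<bar>)))"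
      by (rule prod_ennreal[symmetric]) simp
    finally show "ennreal (norm (exp (- d * norm y))) \<le> (\<Prod>b\<in>Basis. ennreal (exp (- a * \<bar>y \<bullet> b\<bar>)))" .
  qed
  also have "\<dots> = (\<Prod>b\<in>(Basis::'a set). (\<integral>\<^sup>+x. ennreal (exp (- a * \<bar>x\<bar>)) \<partial>lborel))"
    by (rule nn_integral_lborel_prod) auto
  also have "\<dots> < \<infinity>"
    using exp_abs_1d[OF a] by (simp add: less_top[symmetric] power_eq_top_ennreal)
  finally show ?thesis by (subst integrable_iff_bounded) auto
qed



lemma lborel_shift:
  fixes f :: "'a::euclidean_space \<Rightarrow> real"
  assumes [measurable]: "f \<in> borel_measurable borel"
  shows "integrable lborel (\<lambda>x. f (c + x)) \<longleftrightarrow> integrable lborel f"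
    and "(\<integral>x. f (c + x) \<partial>lborel) = (\<integral>x. f x \<partial>lborel)"
proof -
  have m: "(+) c \<in> measurable lborel borel" by measurable
  show "integrable lborel (\<lambda>x. f (c + x)) \<longleftrightarrow> integrable lborel f"
    using integrable_distr_eq[OF m, of f] lborel_distr_plus[of c] by simp
  show "(\<integral>x. f (c + x) \<partial>lborel) = (\<integral>x. f x \<partial>lborel)"
    using integral_distr[OF m, of f] lborel_distr_plus[of c] by simp
qed

lemma exp_avg: fixes a b :: real shows "exp (- ((a + b) / 2)) \<le> (exp (- a) + exp (- b)) / 2"
proof -
  define u where "u = exp (- a / 2)"
  define w where "w = exp (- b / 2)"
  have "exp (- ((a + b) / 2)) = u * w" by (simp add: u_def w_def exp_add[symmetric] field_simps)
  moreover have "exp (- a) = u * u" by (simp add: u_def exp_add[symmetric])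
  moreover have "exp (- b) = w * w" by (simp add: w_def exp_add[symmetric])
  moreover have "u * w \<le> (u * u + w * w) / 2" using sum_squares_bound[of u w] by (simp add: power2_eq_square)
  ultimately show ?thesis by simp
qed

lemma core:
  fixes M H :: "'a::euclidean_space \<Rightarrow> real" and q :: real and v :: 'a
  assumes sM: "seminorm M" and sH: "seminorm H"
    and smooth: "\<And>x. (M (x + v) powr q + M (x - v) powr q) / 2 \<le> M x powr q + 1"
    and gi: "integrable lborel (\<lambda>x. exp (- (M x powr q)))"
    and hi: "integrable lborel (\<lambda>x. H x * exp (- (M x powr q)))"
  shows "H v * (\<integral>x. exp (- (M x powr q)) \<partial>lborel)
           \<le> 2 * (1 + exp 1) * (\<integral>x. H x * exp (- (M x powr q)) \<partial>lborel)"
proof -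
  note [measurable] = sn_meas[OF sM] sn_meas[OF sH]
  define g where "g x = exp (- (M x powr q))" for x
  have gm[measurable]: "g \<in> borel_measurable borel" unfolding g_def by measurable
  have gpos: "0 \<le> g x" for x by (simp add: g_def)
  have gi': "integrable lborel g" using gi by (simp add: g_def[abs_def])
  define s where "s = H v"
  have s0: "0 \<le> s" using sn_nonneg[OF sH] by (simp add: s_def)
  define A where "A = {x. H x < s / 2}"
  define Ap where "Ap = {x. H (x - v) < s / 2}"
  define Am where "Am = {x. H (x + v) < s / 2}"
  have [measurable]: "A \<in> sets borel" "Ap \<in> sets borel" "Am \<in> sets borel" "- A \<in> sets borel"
    unfolding A_def Ap_def Am_def by measurable
  have ApA: "x \<in> Ap \<Longrightarrow> x \<notin> A" for x
  proof -
    assume "x \<in> Ap"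
    moreover have "H v \<le> H x + H (x - v)" using sn_diff[OF sH, of x "x - v"] by simp
    ultimately show "x \<notin> A" by (auto simp: A_def Ap_def s_def)
  qed
  have AmA: "x \<in> Am \<Longrightarrow> x \<notin> A" for x
  proof -
    assume "x \<in> Am"
    moreover have "H v \<le> H (x + v) + H x" using sn_diff[OF sH, of "x + v" x] by simp
    ultimately show "x \<notin> A" by (auto simp: A_def Am_def s_def)
  qed
  have key: "g x \<le> exp 1 * ((g (v + x) + g (- v + x)) / 2)" for x
  proof -
    let ?a = "M (x + v) powr q" and ?b = "M (x - v) powr q" and ?c = "M x powr q"
    have "g x = exp (- ?c)" by (simp add: g_def)
    also have "\<dots> \<le> exp (1 - (?a + ?b) / 2)"
    proof -
      have "- ?c \<le> 1 - (?a + ?b) / 2" using smooth[of x] by linarith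
      then show ?thesis by simp
    qed
    also have "\<dots> = exp 1 * exp (- ((?a + ?b) / 2))" by (simp add: exp_add[symmetric])
    also have "\<dots> \<le> exp 1 * ((exp (- ?a) + exp (- ?b)) / 2)"
      by (intro mult_left_mono exp_avg) simp
    also have "\<dots> = exp 1 * ((g (v + x) + g (- v + x)) / 2)"
      by (simp add: g_def add.commute)
    finally show ?thesis .
  qed
  have iA: "integrable lborel (\<lambda>x. g x * indicator A x)"
    by (rule integrable_real_mult_indicator) (auto simp: gi')
  have iB: "integrable lborel (\<lambda>x. g x * indicator (- A) x)"
    by (rule integrable_real_mult_indicator) (auto simp: gi')
  have iAp: "integrable lborel (\<lambda>x. g x * indicator Ap x)"
    by (rule integrable_real_mult_indicator) (auto simp: gi')
  have iAm: "integrable lborel (\<lambda>x. g x * indicator Am x)"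
    by (rule integrable_real_mult_indicator) (auto simp: gi')
  have eq1: "(\<lambda>x. g (v + x) * indicator A x) = (\<lambda>x. (\<lambda>y. g y * indicator Ap y) (v + x))"
    by (auto simp: Ap_def A_def split: split_indicator)
  have eq2: "(\<lambda>x. g (- v + x) * indicator A x) = (\<lambda>x. (\<lambda>y. g y * indicator Am y) (- v + x))"
    by (auto simp: Am_def A_def split: split_indicator)
  have i1: "integrable lborel (\<lambda>x. g (v + x) * indicator A x)"
    unfolding eq1 by (subst lborel_shift(1)) (auto intro: iAp)
  have I1: "(\<integral>x. g (v + x) * indicator A x \<partial>lborel) = (\<integral>x. g x * indicator Ap x \<partial>lborel)"
    unfolding eq1 by (rule lborel_shift(2)) measurable
  have i2: "integrable lborel (\<lambda>x. g (- v + x) * indicator A x)"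
    unfolding eq2 by (subst lborel_shift(1)) (auto intro: iAm)
  have I2: "(\<integral>x. g (- v + x) * indicator A x \<partial>lborel) = (\<integral>x. g x * indicator Am x \<partial>lborel)"
    unfolding eq2 by (rule lborel_shift(2)) measurable
  define IA where "IA = (\<integral>x. g x * indicator A x \<partial>lborel)"
  define IB where "IB = (\<integral>x. g x * indicator (- A) x \<partial>lborel)"
  have IBp: "(\<integral>x. g x * indicator Ap x \<partial>lborel) \<le> IB"
    unfolding IB_def using ApA gpos
    by (intro integral_mono iAp iB) (auto split: split_indicator)
  have IBm: "(\<integral>x. g x * indicator Am x \<partial>lborel) \<le> IB"
    unfolding IB_def using AmA gpos
    by (intro integral_mono iAm iB) (auto split: split_indicator)
  have "IA \<le> (\<integral>x. exp 1 / 2 * (g (v + x) * indicator A x + g (- v + x) * indicator A x) \<partial>lborel)"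
    unfolding IA_def
  proof (intro integral_mono iA)
    show "integrable lborel (\<lambda>x. exp 1 / 2 * (g (v + x) * indicator A x + g (- v + x) * indicator A x))"
      using i1 i2 by auto
    fix x show "g x * indicator A x \<le> exp 1 / 2 * (g (v + x) * indicator A x + g (- v + x) * indicator A x)"
      using key[of x] by (auto split: split_indicator simp: field_simps)
  qed
  also have "\<dots> = exp 1 / 2 * ((\<integral>x. g (v + x) * indicator A x \<partial>lborel) + (\<integral>x. g (- v + x) * indicator A x \<partial>lborel))"
    using i1 i2 by simp
  also have "\<dots> \<le> exp 1 / 2 * (IB + IB)"
    unfolding I1 I2 using IBp IBm by (intro mult_left_mono) auto
  finally have IAB: "IA \<le> exp 1 * IB" by simp
  have Z: "(\<integral>x. g x \<partial>lborel) = IA + IB"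
  proof -
    have "(\<integral>x. g x \<partial>lborel) = (\<integral>x. g x * indicator A x + g x * indicator (- A) x \<partial>lborel)"
      by (intro Bochner_Integration.integral_cong) (auto split: split_indicator)
    also have "\<dots> = IA + IB" unfolding IA_def IB_def using iA iB by simp
    finally show ?thesis .
  qed
  have hi': "integrable lborel (\<lambda>x. H x * g x)" using hi by (simp add: g_def[abs_def])
  have HB: "s / 2 * IB \<le> (\<integral>x. H x * g x \<partial>lborel)"
  proof -
    have "s / 2 * IB = (\<integral>x. s / 2 * (g x * indicator (- A) x) \<partial>lborel)" unfolding IB_def by simp
    also have "\<dots> \<le> (\<integral>x. H x * g x \<partial>lborel)"
    proof (intro integral_mono hi')
      show "integrable lborel (\<lambda>x. s / 2 * (g x * indicator (- A) x))" using iB by simp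
      fix x show "s / 2 * (g x * indicator (- A) x) \<le> H x * g x"
      proof (cases "x \<in> A")
        case True then show ?thesis using gpos[of x] sn_nonneg[OF sH, of x] by simp
      next
        case False
        then have "s / 2 \<le> H x" by (simp add: A_def)
        then have "s / 2 * g x \<le> H x * g x" using gpos[of x] by (rule mult_right_mono)
        then show ?thesis using False by simp
      qed
    qed
    finally show ?thesis .
  qed
  have "H v * (\<integral>x. g x \<partial>lborel) = s * (IA + IB)" using Z by (simp add: s_def)
  also have "\<dots> \<le> s * ((1 + exp 1) * IB)" using IAB s0 by (intro mult_left_mono) (auto simp: algebra_simps)
  also have "\<dots> = 2 * (1 + exp 1) * (s / 2 * IB)" by simp
  also have "\<dots> \<le> 2 * (1 + exp 1) * (\<integral>x. H x * g x \<partial>lborel)"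
    using HB by (intro mult_left_mono) (auto simp: add_pos_pos less_imp_le)
  finally show ?thesis by (simp add: g_def[abs_def])
qed



lemma tx_bound: fixes t :: real assumes "0 \<le> t" shows "t * exp (- t) \<le> 2 * exp (- (t / 2))"
proof -
  have "t \<le> 2 * exp (t / 2)" using exp_ge_add_one_self[of "t / 2"] assms by linarith
  then have "t * exp (- t) \<le> 2 * exp (t / 2) * exp (- t)" by (intro mult_right_mono) auto
  also have "\<dots> = 2 * exp (- (t / 2))" by (simp add: exp_add[symmetric])
  finally show ?thesis .
qed

lemma powr_ge_minus1: fixes a q :: real assumes "0 \<le> a" "1 \<le> q" shows "a - 1 \<le> a powr q"
proof (cases "a \<ge> 1")
  case True
  then have "a powr 1 \<le> a powr q" using assms by (intro powr_mono) auto
  then show ?thesis using True by simp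
next
  case False then show ?thesis by (smt (verit) powr_ge_zero)
qed

theorem lemma3p4:
  fixes p S :: real
    and N Nhat :: "real ^ 'n \<Rightarrow> real"
    and L :: "real ^ 'm \<Rightarrow> real ^ 'n"
  assumes "p \<ge> 1"
    and "S > 0"
    and "seminorm N"
    and "uniformly_smooth (min p 2) S N"
    and "linear L" and "inj L" and "range L = orth_comp (ker_sn N)"
    and "seminorm Nhat"
    and "ker_sn N \<subseteq> ker_sn Nhat"
  shows "(SUP x\<in>unit_ball_sn N. Nhat x)
           \<le> 12 * S * (\<integral>x. Nhat x \<partial>(exp_density_measure L (min p 2) N))"
proof -
  note sN = assms(3) and sNh = assms(8) and lin = assms(5)
  define q where "q = min p 2"
  have q1: "1 \<le> q" using assms(1) by (simp add: q_def)
  have Lm[measurable]: "L \<in> borel_measurable borel"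
    using lin by (intro borel_measurable_continuous_onI linear_continuous_on) (simp add: linear_conv_bounded_linear)
  note [measurable] = sn_meas[OF sN] sn_meas[OF sNh]
  define M where "M y = N (L y)" for y
  define H where "H y = Nhat (L y)" for y
  have sM: "seminorm M" using sN lin unfolding seminorm_def M_def
    by (simp add: linear_add linear_scale)
  have sH: "seminorm H" using sNh lin unfolding seminorm_def H_def
    by (simp add: linear_add linear_scale)
  have Mdef: "y = 0" if "M y = 0" for y
  proof -
    have "L y \<in> ker_sn N" using that by (simp add: M_def ker_sn_def)
    moreover have "L y \<in> orth_comp (ker_sn N)" using assms(7) by blast
    ultimately have "inner (L y) (L y) = 0" by (simp add: orth_comp_def)
    then have "L y = 0" by simp
    then show ?thesis using assms(6) lin by (metis inj_eq linear_0)
  qed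
  obtain c where c: "c > 0" "\<And>y. c * norm y \<le> M y" using sn_lower[OF sM Mdef] by blast
  obtain C where C: "C \<ge> 0" "\<And>y. H y \<le> C * norm y" using sn_upper[OF sH] by blast
  define g where "g y = exp (- (M y powr q))" for y
  have [measurable]: "M \<in> borel_measurable borel" "H \<in> borel_measurable borel"
    using sn_meas[OF sM] sn_meas[OF sH] .
  have gm[measurable]: "g \<in> borel_measurable borel" unfolding g_def by measurable
  have gbound: "g y \<le> exp 1 * exp (- c * norm y)" for y
  proof -
    have "c * norm y - 1 \<le> M y - 1" using c(2)[of y] by simp
    also have "\<dots> \<le> M y powr q" by (rule powr_ge_minus1[OF sn_nonneg[OF sM] q1])
    finally have "- (M y powr q) \<le> 1 + (- c * norm y)" by simp
    then have "g y \<le> exp (1 + (- c * norm y))" by (simp add: g_def)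
    then show ?thesis by (simp only: exp_add)
  qed
  have gi: "integrable lborel g"
  proof (rule Bochner_Integration.integrable_bound[where f="\<lambda>y::real^'m. exp 1 * exp (- c * norm y)"])
    show "integrable lborel (\<lambda>y::real^'m. exp 1 * exp (- c * norm y))"
      using exp_norm_integrable[OF c(1)] by simp
    show "AE x in lborel. norm (g x) \<le> norm (exp 1 * exp (- c * norm x))"
      using gbound by (simp add: g_def)
  qed simp
  have hbound: "H y * g y \<le> (C * exp 1 * (2 / c)) * exp (- (c / 2) * norm y)" for y
  proof -
    have "H y * g y \<le> (C * norm y) * (exp 1 * exp (- c * norm y))"
      using C(2)[of y] gbound[of y] sn_nonneg[OF sH, of y]
      by (intro mult_mono) (auto simp: g_def)
    also have "\<dots> = (C * exp 1 / c) * ((c * norm y) * exp (- (c * norm y)))" using c(1) by simp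
    also have "\<dots> \<le> (C * exp 1 / c) * (2 * exp (- ((c * norm y) / 2)))"
      using C(1) c(1) by (intro mult_left_mono tx_bound) auto
    also have "\<dots> = (C * exp 1 * (2 / c)) * exp (- (c / 2) * norm y)" by simp
    finally show ?thesis .
  qed
  have hi: "integrable lborel (\<lambda>y. H y * g y)"
  proof (rule Bochner_Integration.integrable_bound[where f="\<lambda>y::real^'m. (C * exp 1 * (2 / c)) * exp (- (c / 2) * norm y)"])
    show "integrable lborel (\<lambda>y::real^'m. (C * exp 1 * (2 / c)) * exp (- (c / 2) * norm y))"
      using c(1) by (intro integrable_mult_right exp_norm_integrable) simp
    show "AE x in lborel. norm (H x * g x) \<le> norm ((C * exp 1 * (2 / c)) * exp (- (c / 2) * norm x))"
    proof (rule AE_I2)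
      fix x :: "real^'m"
      have "norm (H x * g x) = H x * g x" using sn_nonneg[OF sH, of x] by (simp add: g_def)
      also have "\<dots> \<le> (C * exp 1 * (2 / c)) * exp (- (c / 2) * norm x)" by (rule hbound)
      also have "\<dots> \<le> norm ((C * exp 1 * (2 / c)) * exp (- (c / 2) * norm x))"
        unfolding real_norm_def by (rule abs_ge_self)
      finally show "norm (H x * g x) \<le> norm ((C * exp 1 * (2 / c)) * exp (- (c / 2) * norm x))" .
    qed
  qed simp
  define Z where "Z = (\<integral>y. g y \<partial>lborel)"
  have Zpos: "Z > 0"
  proof -
    have nn: "0 \<le> Z" unfolding Z_def by (intro integral_nonneg_AE) (simp add: g_def)
    have "Z \<noteq> 0"
    proof
      assume "Z = 0"
      have gnn: "AE y in lborel. 0 \<le> g y" by (simp add: g_def)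
      have "AE y in lborel. g y = 0"
        using integral_nonneg_eq_0_iff_AE[OF gi gnn] \<open>Z = 0\<close> unfolding Z_def by simp
      then have "AE y in (lborel :: (real^'m) measure). False" by (simp add: g_def)
      then obtain Nn :: "(real^'m) set" where Nn: "{x \<in> space lborel. \<not> False} \<subseteq> Nn" "emeasure lborel Nn = 0" "Nn \<in> sets lborel"
        by (rule AE_E)
      then have "Nn = UNIV" by auto
      then show False using Nn(2) by simp
    qed
    then show ?thesis using nn by simp
  qed
  define I where "I = (\<integral>y. H y * g y \<partial>lborel)"
  have Inn: "0 \<le> I" unfolding I_def
    by (intro integral_nonneg_AE) (simp add: g_def sn_nonneg[OF sH])
  have Lm2[measurable]: "L \<in> measurable lborel borel" using Lm by simp
  have RHS: "(\<integral>x. Nhat x \<partial>(exp_density_measure L q N)) = I / Z"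
  proof -
    have Z0: "(\<integral>x. exp (- (N x powr q)) \<partial>(subspace_leb L)) = Z"
      unfolding subspace_leb_def Z_def g_def M_def by (subst integral_distr) auto
    have "(\<integral>x. Nhat x \<partial>(exp_density_measure L q N))
        = (\<integral>x. (exp (- (N x powr q)) / Z) *\<^sub>R Nhat x \<partial>(subspace_leb L))"
      unfolding exp_density_measure_def Let_def Z0
      by (rule integral_density[where g="\<lambda>x. exp (- (N x powr q)) / Z"])
         (auto simp: subspace_leb_def Zpos less_imp_le)
    also have "\<dots> = (\<integral>y. (exp (- (N (L y) powr q)) / Z) *\<^sub>R Nhat (L y) \<partial>lborel)"
      unfolding subspace_leb_def by (subst integral_distr) auto
    also have "\<dots> = (\<integral>y. (H y * g y) / Z \<partial>lborel)"
      by (intro Bochner_Integration.integral_cong) (auto simp: H_def g_def M_def)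
    also have "\<dots> = I / Z" by (simp add: I_def)
    finally show ?thesis .
  qed
  have sub: "subspace (ker_sn N)"
  proof -
    have "N (a + b) = 0" if "N a = 0" "N b = 0" for a b
      using sn_add[OF sN, of a b] sn_nonneg[OF sN, of "a + b"] that by simp
    then show ?thesis unfolding subspace_def ker_sn_def using sn_0[OF sN] sn_scale[OF sN] by auto
  qed
  have main: "Nhat x \<le> 12 * S * (I / Z)" if "x \<in> unit_ball_sn N" for x
  proof -
    have Nx: "N x \<le> 1" using that by (simp add: unit_ball_sn_def)
    obtain y0 z where yz: "y0 \<in> span (ker_sn N)" "\<And>w. w \<in> span (ker_sn N) \<Longrightarrow> orthogonal z w"
      "x = y0 + z"
      by (rule orthogonal_subspace_decomp_exists[of "ker_sn N" x]) blast
    have "y0 \<in> ker_sn N" using yz(1) sub by (metis span_eq_iff)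
    then have y0: "N y0 = 0" "Nhat y0 = 0" using assms(9) by (auto simp: ker_sn_def)
    have "z \<in> orth_comp (ker_sn N)"
      using yz(2) by (auto simp: orth_comp_def orthogonal_def intro: span_base)
    then obtain y where zy: "z = L y" using assms(7) by (metis imageE)
    have "N z \<le> N x + N y0" using sn_diff[OF sN, of x y0] yz(3) by simp
    then have My: "M y \<le> 1" using Nx y0 zy by (simp add: M_def)
    have "Nhat x \<le> Nhat y0 + Nhat z" using sn_add[OF sNh] yz(3) by simp
    then have NH: "Nhat x \<le> H y" using y0 zy by (simp add: H_def)
    define v where "v = (1 / S) *\<^sub>R y"
    have smooth: "(M (x' + v) powr q + M (x' - v) powr q) / 2 \<le> M x' powr q + 1" for x'
    proof -
      have "(N (L x' + L v) powr q + N (L x' - L v) powr q) / 2 \<le> N (L x') powr q + N (S *\<^sub>R L v) powr q"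
        using assms(4) unfolding uniformly_smooth_def q_def by blast
      moreover have "S *\<^sub>R L v = L y" using assms(2) lin by (simp add: v_def linear_scale)
      moreover have "N (L y) powr q \<le> 1"
        using My q1 sn_nonneg[OF sN, of "L y"] by (intro powr_le1) (auto simp: M_def)
      ultimately show ?thesis using lin by (simp add: M_def linear_add linear_diff)
    qed
    have gi': "integrable lborel (\<lambda>x. exp (- (M x powr q)))" using gi by (simp add: g_def[abs_def])
    have hi': "integrable lborel (\<lambda>x. H x * exp (- (M x powr q)))" using hi by (simp add: g_def[abs_def])
    have cr: "H v * Z \<le> 2 * (1 + exp 1) * I"
      using core[OF sM sH smooth gi' hi'] by (simp add: Z_def I_def g_def[abs_def])
    have Hv: "H v = H y / S" using sn_scale[OF sH] assms(2) by (simp add: v_def)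
    have "H y * Z \<le> (2 * (1 + exp 1) * I) * S" using cr Hv assms(2) by (simp add: field_simps)
    then have "H y \<le> 2 * (1 + exp 1) * S * (I / Z)" using Zpos by (simp add: field_simps)
    also have "\<dots> \<le> 12 * S * (I / Z)"
      using exp_le Inn Zpos assms(2) by (intro mult_right_mono) auto
    finally show ?thesis using NH by simp
  qed
  have "(SUP x\<in>unit_ball_sn N. Nhat x) \<le> 12 * S * (I / Z)"
  proof -
    have "0 \<in> unit_ball_sn N" using sn_0[OF sN] by (simp add: unit_ball_sn_def)
    then have ne: "unit_ball_sn N \<noteq> {}" by blast
    show ?thesis by (rule cSUP_least[OF ne main])
  qed
  then show ?thesis using RHS by (simp add: q_def)
qed

end
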